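(* The assignment $\sigma(V)=V$ and $\sigma([V\to X\leftarrow W])=[V\leftarrow V\times_X W\rightarrow W]$ (with $V\times_X W$ the pullback in $\mathcal{E}_q^{deg}$) gives a well-defined functor $\sigma:\mathcal{T}_q\to\mathcal{S}_q$, and $\sigma$ is monoidal with respect to the orthogonal sums $\perp$ on $\mathcal{T}_q$ and on $\mathcal{S}_q$.
   Context: All vector spaces over $\mathbb{F}_2$. $\mathcal{E}_q^{deg}$: objects finite-dimensional quadratic spaces (possibly degenerate), morphisms injective linear maps preserving quadratic forms; pullback of $\alpha:D\to V$, $\beta:D'\to V$ is $\alpha(D)\cap\beta(D')$ with restricted form. $\mathrm{Sp}(\mathcal{E}_q^{deg})$: morphisms spans $[V\leftarrow D\rightarrow W]$ up to iso of $D$, composed by pullback. $\mathcal{S}_q$: its full subcategory on non-degenerate spaces. $\mathcal{E}_q$: full subcategory of $\mathcal{E}_q^{deg}$ on non-degenerate spaces. Pseudo push-out of $f:V\to W=f(V)\perp V'$, $g:V\to X=g(V)\perp V''$ in $\mathcal{E}_q$: $V\perp V'\perp V''$ with maps $f(v)+v'\mapsto v+v'$, $g(v)+v''\mapsto v+v''$. $\mathcal{T}_q$: objects of $\mathcal{E}_q$; morphisms classes of cospans $[V\to X\leftarrow W]$ in $\mathcal{E}_q$ modulo the equivalence relation generated by existence of an $\mathcal{E}_q$-morphism between middle objects compatible with the legs; composition via pseudo push-out. The orthogonal sum on $\mathcal{T}_q$ (resp. $\mathcal{S}_q$) is $V\perp W$ on objects and componentwise orthogonal sum of cospans (resp. spans)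 on morphisms. *)

theory Defs
  imports Main "HOL-Library.Z2" "HOL-Library.Product_Plus"
begin

text \<open>
  An F_2-vector space is modelled as a finite subset S of an abelian group
  type 'a (the carrier) which contains 0, is closed under + and satisfies x + x = 0
  (an elementary abelian 2-group, i.e. exactly an F_2-vector space; F_2-linear maps are
  exactly additive maps).  Finite-dimensional = finite carrier.
\<close>

type_synonym 'a qspace = "'a set \<times> ('a \<Rightarrow> bit)"

definition f2space :: "'a::ab_group_add set \<Rightarrow> bool" where
  "f2space S \<longleftrightarrow> finite S \<and> 0 \<in> S \<and> (\<forall>x\<in>S. \<forall>y\<in>S. x + y \<in> S) \<and> (\<forall>x\<in>S. x + x = 0)"

definition polar :: "('a::ab_group_add \<Rightarrow> bit) \<Rightarrow> 'a \<Rightarrow> 'a \<Rightarrow> bit" where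
  "polar q x y = q (x + y) + q x + q y"

definition is_qspace :: "'a::ab_group_add qspace \<Rightarrow> bool" where
  "is_qspace V \<longleftrightarrow> f2space (fst V) \<and> snd V 0 = 0 \<and>
     (\<forall>x\<in>fst V. \<forall>y\<in>fst V. \<forall>z\<in>fst V.
        polar (snd V) (x + y) z = polar (snd V) x z + polar (snd V) y z)"

definition nondeg :: "'a::ab_group_add qspace \<Rightarrow> bool" where
  "nondeg V \<longleftrightarrow> (\<forall>x\<in>fst V. (\<forall>y\<in>fst V. polar (snd V) x y = 0) \<longrightarrow> x = 0)"

definition qmor :: "'a::ab_group_add qspace \<Rightarrow> 'b::ab_group_add qspace \<Rightarrow> ('a \<Rightarrow> 'b) \<Rightarrow> bool" where
  "qmor V W f \<longleftrightarrow> f ` fst V \<subseteq> fst W \<and> inj_on f (fst V) \<and>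
     (\<forall>x\<in>fst V. \<forall>y\<in>fst V. f (x + y) = f x + f y) \<and>
     (\<forall>x\<in>fst V. snd W (f x) = snd V x)"

definition nd_qspace :: "'a::ab_group_add qspace \<Rightarrow> bool" where
  "nd_qspace V \<longleftrightarrow> is_qspace V \<and> nondeg V"

definition orth_sum :: "'a::ab_group_add qspace \<Rightarrow> 'b::ab_group_add qspace \<Rightarrow> ('a \<times> 'b) qspace" where
  "orth_sum V W = (fst V \<times> fst W, \<lambda>(v, w). snd V v + snd W w)"

type_synonym ('d, 'v, 'w) span = "'d qspace \<times> ('d \<Rightarrow> 'v) \<times> ('d \<Rightarrow> 'w)"

type_synonym ('v, 'x, 'w) cospan = "('v \<Rightarrow> 'x) \<times> 'x qspace \<times> ('w \<Rightarrow> 'x)"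

definition is_Sq_span :: "'v::ab_group_add qspace \<Rightarrow> 'w::ab_group_add qspace \<Rightarrow>
    ('d::ab_group_add, 'v, 'w) span \<Rightarrow> bool" where
  "is_Sq_span V W s \<longleftrightarrow> (case s of (D, a, b) \<Rightarrow>
     nd_qspace V \<and> nd_qspace W \<and> is_qspace D \<and> qmor D V a \<and> qmor D W b)"

definition is_Tq_cospan :: "'v::ab_group_add qspace \<Rightarrow> 'w::ab_group_add qspace \<Rightarrow>
    ('v, 'x::ab_group_add, 'w) cospan \<Rightarrow> bool" where
  "is_Tq_cospan V W c \<longleftrightarrow> (case c of (f, X, g) \<Rightarrow>
     nd_qspace V \<and> nd_qspace W \<and> nd_qspace X \<and> qmor V X f \<and> qmor W X g)"

text \<open>Equality of morphisms in Sp(E_q^deg): spans identified up to isomorphism of D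
  compatible with the legs.\<close>
definition span_iso :: "('d::ab_group_add, 'v, 'w) span \<Rightarrow> ('e::ab_group_add, 'v, 'w) span \<Rightarrow> bool" where
  "span_iso s t \<longleftrightarrow> (case s of (D, a, b) \<Rightarrow> case t of (E, c, d) \<Rightarrow>
     (\<exists>\<phi>. bij_betw \<phi> (fst D) (fst E) \<and> qmor D E \<phi> \<and>
          (\<forall>x\<in>fst D. c (\<phi> x) = a x \<and> d (\<phi> x) = b x)))"

text \<open>One generating step of the equivalence relation on cospans: an E_q-morphism
  between the middle objects compatible with the legs.\<close>
definition cospan_step :: "'v::ab_group_add qspace \<Rightarrow> 'w::ab_group_add qspace \<Rightarrow>
    ('v, 'x::ab_group_add, 'w) cospan \<Rightarrow> ('v, 'y::ab_group_add, 'w) cospan \<Rightarrow> bool" where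
  "cospan_step V W c c' \<longleftrightarrow> (case c of (f, X, g) \<Rightarrow> case c' of (f', X', g') \<Rightarrow>
     (\<exists>\<phi>. qmor X X' \<phi> \<and> (\<forall>v\<in>fst V. \<phi> (f v) = f' v) \<and> (\<forall>w\<in>fst W. \<phi> (g w) = g' w)))"

definition id_span :: "'v qspace \<Rightarrow> ('v, 'v, 'v) span" where
  "id_span V = (V, id, id)"

definition id_cospan :: "'v qspace \<Rightarrow> ('v, 'v, 'v) cospan" where
  "id_cospan V = (id, V, id)"

definition pullback_obj :: "'w qspace \<Rightarrow> 'd set \<Rightarrow> ('d \<Rightarrow> 'w) \<Rightarrow> 'e set \<Rightarrow> ('e \<Rightarrow> 'w) \<Rightarrow> 'w qspace" where
  "pullback_obj W D \<alpha> D' \<beta> = (\<alpha> ` D \<inter> \<beta> ` D', snd W)"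

definition span_comp :: "'w qspace \<Rightarrow> ('d, 'v, 'w) span \<Rightarrow> ('e, 'w, 'u) span \<Rightarrow> ('w, 'v, 'u) span" where
  "span_comp W s t = (case s of (D, a, b) \<Rightarrow> case t of (D', c, d) \<Rightarrow>
     (pullback_obj W (fst D) b (fst D') c,
      a \<circ> inv_into (fst D) b,
      d \<circ> inv_into (fst D') c))"

definition sigma :: "'v qspace \<Rightarrow> 'w qspace \<Rightarrow> ('v, 'x, 'w) cospan \<Rightarrow> ('x, 'v, 'w) span" where
  "sigma V W c = (case c of (f, X, g) \<Rightarrow>
     (pullback_obj X (fst V) f (fst W) g, inv_into (fst V) f, inv_into (fst W) g))"

definition orth_compl :: "'w qspace \<Rightarrow> 'x::ab_group_add qspace \<Rightarrow> ('w \<Rightarrow> 'x) \<Rightarrow> 'x set" where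
  "orth_compl W X g = {x \<in> fst X. \<forall>w\<in>fst W. polar (snd X) x (g w) = 0}"

text \<open>Pseudo push-out of g: W -> X = g(W) \<perp> X', h: W -> Y = h(W) \<perp> Y':
  the object W \<perp> X' \<perp> Y' together with the maps
  g(w) + x' |-> (w, x', 0) and h(w) + y' |-> (w, 0, y').\<close>
definition pp_obj :: "'w::ab_group_add qspace \<Rightarrow> 'x::ab_group_add qspace \<Rightarrow> 'y::ab_group_add qspace \<Rightarrow>
    ('w \<Rightarrow> 'x) \<Rightarrow> ('w \<Rightarrow> 'y) \<Rightarrow> ('w \<times> 'x \<times> 'y) qspace" where
  "pp_obj W X Y g h = orth_sum W (orth_sum (orth_compl W X g, snd X) (orth_compl W Y h, snd Y))"

definition pp_left :: "'w::ab_group_add qspace \<Rightarrow> 'x::ab_group_add qspace \<Rightarrow> ('w \<Rightarrow> 'x) \<Rightarrow>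
    'x \<Rightarrow> 'w \<times> 'x \<times> 'y::ab_group_add" where
  "pp_left W X g x = (let w = (THE w. w \<in> fst W \<and> x - g w \<in> orth_compl W X g)
                      in (w, x - g w, 0))"

definition pp_right :: "'w::ab_group_add qspace \<Rightarrow> 'y::ab_group_add qspace \<Rightarrow> ('w \<Rightarrow> 'y) \<Rightarrow>
    'y \<Rightarrow> 'w \<times> 'x::ab_group_add \<times> 'y" where
  "pp_right W Y h y = (let w = (THE w. w \<in> fst W \<and> y - h w \<in> orth_compl W Y h)
                       in (w, 0, y - h w))"

definition cospan_comp :: "'w::ab_group_add qspace \<Rightarrow> ('v, 'x::ab_group_add, 'w) cospan \<Rightarrow>
    ('w, 'y::ab_group_add, 'u) cospan \<Rightarrow> ('v, 'w \<times> 'x \<times> 'y, 'u) cospan" where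
  "cospan_comp W c d = (case c of (f, X, g) \<Rightarrow> case d of (h, Y, k) \<Rightarrow>
     (pp_left W X g \<circ> f, pp_obj W X Y g h, pp_right W Y h \<circ> k))"

definition cospan_sum :: "('v1, 'x1::ab_group_add, 'w1) cospan \<Rightarrow> ('v2, 'x2::ab_group_add, 'w2) cospan \<Rightarrow>
    ('v1 \<times> 'v2, 'x1 \<times> 'x2, 'w1 \<times> 'w2) cospan" where
  "cospan_sum c d = (case c of (f1, X1, g1) \<Rightarrow> case d of (f2, X2, g2) \<Rightarrow>
     (map_prod f1 f2, orth_sum X1 X2, map_prod g1 g2))"

definition span_sum :: "('d1::ab_group_add, 'v1, 'w1) span \<Rightarrow> ('d2::ab_group_add, 'v2, 'w2) span \<Rightarrow>
    ('d1 \<times> 'd2, 'v1 \<times> 'v2, 'w1 \<times> 'w2) span" where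
  "span_sum s t = (case s of (D1, a1, b1) \<Rightarrow> case t of (D2, a2, b2) \<Rightarrow>
     (orth_sum D1 D2, map_prod a1 a2, map_prod b1 b2))"

end

theory Submission
  imports Defs
begin


lemma bit_dbl[simp]: "(b::bit) + b = 0" by (cases b) simp_all

lemma qs_fin: "is_qspace X \<Longrightarrow> finite (fst X)" by (simp add: is_qspace_def f2space_def)
lemma qs_0: "is_qspace X \<Longrightarrow> 0 \<in> fst X" by (simp add: is_qspace_def f2space_def)
lemma qs_add: "is_qspace X \<Longrightarrow> x \<in> fst X \<Longrightarrow> y \<in> fst X \<Longrightarrow> x + y \<in> fst X"
  by (simp add: is_qspace_def f2space_def)
lemma qs_dbl: "is_qspace X \<Longrightarrow> x \<in> fst X \<Longrightarrow> x + x = 0" by (simp add: is_qspace_def f2space_def)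
lemma qs_q0: "is_qspace X \<Longrightarrow> snd X 0 = 0" by (simp add: is_qspace_def)
lemma qs_neg: "is_qspace X \<Longrightarrow> x \<in> fst X \<Longrightarrow> - x = x"
  using qs_dbl by (metis add_eq_0_iff)
lemma qs_diff: "is_qspace X \<Longrightarrow> y \<in> fst X \<Longrightarrow> x - y = x + y"
  using qs_neg by (metis diff_conv_add_uminus)

lemma polar_sym: "polar q x y = polar q y x"
  unfolding polar_def by (simp only: add.commute[of x y]) (simp only: ac_simps)
lemma polar_add1: "is_qspace X \<Longrightarrow> x \<in> fst X \<Longrightarrow> y \<in> fst X \<Longrightarrow> z \<in> fst X \<Longrightarrow>
   polar (snd X) (x + y) z = polar (snd X) x z + polar (snd X) y z"
  by (simp add: is_qspace_def)
lemma polar_add2: "is_qspace X \<Longrightarrow> x \<in> fst X \<Longrightarrow> y \<in> fst X \<Longrightarrow> z \<in> fst X \<Longrightarrow>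
   polar (snd X) z (x + y) = polar (snd X) z x + polar (snd X) z y"
  using polar_add1[of X x y z] polar_sym[of "snd X"] by simp
lemma polar_01: "snd X 0 = 0 \<Longrightarrow> polar (snd X) 0 y = 0"
  by (simp add: polar_def)
lemma polar_02: "snd X 0 = 0 \<Longrightarrow> polar (snd X) y 0 = 0"
  by (simp add: polar_def)
lemma polar_self: "is_qspace X \<Longrightarrow> x \<in> fst X \<Longrightarrow> polar (snd X) x x = 0"
  by (simp add: polar_def qs_dbl qs_q0)
lemma polar_sel2: "snd X 0 = 0 \<Longrightarrow> polar (snd X) s (if c = 1 then a else 0) = c * polar (snd X) s a"
  by (cases c) (simp_all add: polar_02)
lemma polar_sel1: "snd X 0 = 0 \<Longrightarrow> polar (snd X) (if c = 1 then a else 0) s = c * polar (snd X) a s"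
  by (cases c) (simp_all add: polar_01)

lemma decomp:
  assumes X: "is_qspace X"
  shows "U \<subseteq> fst X \<Longrightarrow> 0 \<in> U \<Longrightarrow> (\<forall>s\<in>U. \<forall>t\<in>U. s + t \<in> U) \<Longrightarrow>
    (\<forall>s\<in>U. (\<forall>t\<in>U. polar (snd X) s t = 0) \<longrightarrow> s = 0) \<Longrightarrow> x \<in> fst X \<Longrightarrow>
    \<exists>u\<in>U. \<forall>t\<in>U. polar (snd X) (x + u) t = 0"
proof (induct "card U" arbitrary: U x rule: less_induct)
  case (less U x)
  let ?B = "polar (snd X)"
  have q0: "snd X 0 = 0" using X qs_q0 by blast
  have finU: "finite U" using less.prems(1) qs_fin[OF X] finite_subset by blast
  show ?case
  proof (cases "U = {0}")
    case True
    then show ?thesis using polar_02[OF q0] by auto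
  next
    case False
    then obtain a where a: "a \<in> U" "a \<noteq> 0" using less.prems(2) by blast
    have "\<exists>b\<in>U. ?B a b \<noteq> 0" using a less.prems(4) by blast
    then obtain b where b: "b \<in> U" "?B a b = 1" by auto
    have aX: "a \<in> fst X" and bX: "b \<in> fst X" using a b less.prems(1) by auto
    have ba: "?B b a = 1" using b polar_sym[of "snd X" b a] by simp
    have aa: "?B a a = 0" and bb: "?B b b = 0" using polar_self[OF X] aX bX by auto
    define U' where "U' = {s\<in>U. ?B a s = 0 \<and> ?B b s = 0}"
    define sa where "sa t = (if ?B t b = 1 then a else 0)" for t
    define sb where "sb t = (if ?B t a = 1 then b else 0)" for t
    define pj where "pj t = t + sa t + sb t" for t
    have saX: "sa t \<in> fst X" "sa t \<in> U" for t using aX a qs_0[OF X] less.prems(2) by (auto simp: sa_def)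
    have sbX: "sb t \<in> fst X" "sb t \<in> U" for t using bX b qs_0[OF X] less.prems(2) by (auto simp: sb_def)
    have pjX: "pj t \<in> fst X" if "t \<in> fst X" for t
      using that saX sbX qs_add[OF X] by (simp add: pj_def)
    have pjU: "pj t \<in> U" if "t \<in> U" for t
      using that saX sbX less.prems(3) by (simp add: pj_def)
    have pja: "?B a (pj t) = 0" if "t \<in> fst X" for t
    proof -
      have "?B a (pj t) = ?B a t + ?B a (sa t) + ?B a (sb t)"
        unfolding pj_def using that saX sbX polar_add2[OF X _ _ aX] qs_add[OF X] by simp
      also have "\<dots> = ?B a t + ?B t a"
        unfolding sa_def sb_def polar_sel2[OF q0] using aa b by simp
      finally show ?thesis using polar_sym[of "snd X" t a] by simp
    qed
    have pjb: "?B b (pj t) = 0" if "t \<in> fst X" for t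
    proof -
      have "?B b (pj t) = ?B b t + ?B b (sa t) + ?B b (sb t)"
        unfolding pj_def using that saX sbX polar_add2[OF X _ _ bX] qs_add[OF X] by simp
      also have "\<dots> = ?B b t + ?B t b"
        unfolding sa_def sb_def polar_sel2[OF q0] using bb ba by simp
      finally show ?thesis using polar_sym[of "snd X" t b] by simp
    qed
    have pjs: "?B s (pj t) = ?B s t" if "t \<in> fst X" "s \<in> fst X" "?B a s = 0" "?B b s = 0" for s t
    proof -
      have "?B s (pj t) = ?B s t + ?B s (sa t) + ?B s (sb t)"
        unfolding pj_def using that saX sbX polar_add2[OF X _ _ that(2)] qs_add[OF X] by simp
      also have "\<dots> = ?B s t"
        unfolding sa_def sb_def polar_sel2[OF q0] using that polar_sym[of "snd X" s a] polar_sym[of "snd X" s b] by simp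
      finally show ?thesis .
    qed
    have pjU': "pj t \<in> U'" if "t \<in> U" for t
      using pjU pja pjb that less.prems(1) by (auto simp: U'_def)
    have sub': "U' \<subseteq> fst X" using less.prems(1) by (auto simp: U'_def)
    have z': "0 \<in> U'" using less.prems(2) polar_02[OF q0] by (auto simp: U'_def)
    have cl': "\<forall>s\<in>U'. \<forall>t\<in>U'. s + t \<in> U'"
    proof (intro ballI)
      fix s t assume s: "s \<in> U'" and t: "t \<in> U'"
      have sX: "s \<in> fst X" and tX: "t \<in> fst X" using s t less.prems(1) by (auto simp: U'_def)
      have "?B a (s + t) = ?B a s + ?B a t" using polar_add2[OF X sX tX aX] .
      moreover have "?B b (s + t) = ?B b s + ?B b t" using polar_add2[OF X sX tX bX] .
      ultimately show "s + t \<in> U'" using s t less.prems(3) by (simp add: U'_def)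
    qed
    have nd': "\<forall>s\<in>U'. (\<forall>t\<in>U'. ?B s t = 0) \<longrightarrow> s = 0"
    proof (intro ballI impI)
      fix s assume s: "s \<in> U'" and h: "\<forall>t\<in>U'. ?B s t = 0"
      have "\<forall>t\<in>U. ?B s t = 0"
      proof
        fix t assume t: "t \<in> U"
        have "?B s t = ?B s (pj t)" using pjs[of t s] s t less.prems(1)
          by (auto simp: U'_def subset_iff)
        then show "?B s t = 0" using h pjU' t by simp
      qed
      then show "s = 0" using less.prems(4) s by (auto simp: U'_def)
    qed
    have "a \<notin> U'" using ba by (simp add: U'_def)
    moreover have "U' \<subseteq> U" by (auto simp: U'_def)
    ultimately have "U' \<subset> U" using a by blast
    then have card': "card U' < card U" using finU psubset_card_mono by blast
    obtain u0 where u0: "u0 \<in> U'" "\<forall>t\<in>U'. ?B (x + u0) t = 0"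
      using less.hyps[OF card' sub' z' cl' nd' less.prems(5)] by blast
    define y where "y = x + u0"
    have yX: "y \<in> fst X" using u0 sub' less.prems(5) qs_add[OF X] by (auto simp: y_def)
    have u0U: "u0 \<in> U" using u0 by (simp add: U'_def)
    define u where "u = u0 + sa y + sb y"
    have uU: "u \<in> U" using u0U saX sbX less.prems(3) by (simp add: u_def)
    have xu: "x + u = pj y" by (simp add: u_def pj_def y_def add.assoc)
    have "\<forall>t\<in>U. ?B (x + u) t = 0"
    proof
      fix t assume t: "t \<in> U"
      have tX: "t \<in> fst X" using t less.prems(1) by auto
      have "?B (pj y) t = ?B t (pj y)" by (rule polar_sym)
      also have "\<dots> = ?B (pj y) (pj t)"
        using pjs[OF tX pjX[OF yX] pja[OF yX] pjb[OF yX]] polar_sym[of "snd X" t "pj y"]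
        by simp
      also have "\<dots> = ?B (pj t) (pj y)" by (rule polar_sym)
      also have "\<dots> = ?B (pj t) y"
        using pjs[OF yX pjX[OF tX] pja[OF tX] pjb[OF tX]] by simp
      also have "\<dots> = 0" using u0(2) pjU'[OF t] polar_sym[of "snd X" "pj t" y] y_def by simp
      finally show "?B (x + u) t = 0" using xu by simp
    qed
    then show ?thesis using uU by blast
  qed
qed



lemma qmor_in: "qmor V X f \<Longrightarrow> v \<in> fst V \<Longrightarrow> f v \<in> fst X" by (auto simp: qmor_def)
lemma qmor_add: "qmor V X f \<Longrightarrow> a \<in> fst V \<Longrightarrow> b \<in> fst V \<Longrightarrow> f (a + b) = f a + f b" by (auto simp: qmor_def)
lemma qmor_q: "qmor V X f \<Longrightarrow> a \<in> fst V \<Longrightarrow> snd X (f a) = snd V a" by (auto simp: qmor_def)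
lemma qmor_inj: "qmor V X f \<Longrightarrow> inj_on f (fst V)" by (auto simp: qmor_def)
lemma qmor_0: "is_qspace V \<Longrightarrow> qmor V X f \<Longrightarrow> f 0 = 0"
proof -
  assume V: "is_qspace V" and f: "qmor V X f"
  have "f 0 = f 0 + f 0" using qmor_add[OF f qs_0[OF V] qs_0[OF V]] by simp
  then show "f 0 = 0" by simp
qed
lemma qmor_polar: "is_qspace V \<Longrightarrow> qmor V X f \<Longrightarrow> a \<in> fst V \<Longrightarrow> b \<in> fst V \<Longrightarrow>
   polar (snd X) (f a) (f b) = polar (snd V) a b"
proof -
  assume V: "is_qspace V" and f: "qmor V X f" and a: "a \<in> fst V" and b: "b \<in> fst V"
  have "snd X (f a + f b) = snd V (a + b)"
    using qmor_add[OF f a b] qmor_q[OF f qs_add[OF V a b]] by simp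
  then show ?thesis unfolding polar_def using qmor_q[OF f a] qmor_q[OF f b] by simp
qed

lemma compl_iff: "x \<in> orth_compl W X g \<longleftrightarrow> x \<in> fst X \<and> (\<forall>w\<in>fst W. polar (snd X) x (g w) = 0)"
  by (simp add: orth_compl_def)

lemma bit_cancel: "(p::bit) + a = 0 \<Longrightarrow> p + b = 0 \<Longrightarrow> a = b"
  by (cases p; cases a; cases b) simp_all

lemma compl_unique:
  assumes X: "is_qspace X" and W: "nd_qspace W" and g: "qmor W X g"
    and w: "w1 \<in> fst W" "w2 \<in> fst W" and x: "x \<in> fst X"
    and c: "x - g w1 \<in> orth_compl W X g" "x - g w2 \<in> orth_compl W X g"
  shows "w1 = w2"
proof -
  have Wq: "is_qspace W" and Wn: "nondeg W" using W by (auto simp: nd_qspace_def)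
  have g1: "g w1 \<in> fst X" and g2: "g w2 \<in> fst X" using qmor_in[OF g w(1)] qmor_in[OF g w(2)] by auto
  have "polar (snd W) (w1 + w2) w' = 0" if w': "w' \<in> fst W" for w'
  proof -
    have gw': "g w' \<in> fst X" using qmor_in[OF g w'] .
    have "polar (snd X) (x + g w1) (g w') = 0" using c(1) w' qs_diff[OF X g1] by (simp add: compl_iff)
    then have e1: "polar (snd X) x (g w') + polar (snd X) (g w1) (g w') = 0"
      using polar_add1[OF X x g1 gw'] by simp
    have "polar (snd X) (x + g w2) (g w') = 0" using c(2) w' qs_diff[OF X g2] by (simp add: compl_iff)
    then have e2: "polar (snd X) x (g w') + polar (snd X) (g w2) (g w') = 0"
      using polar_add1[OF X x g2 gw'] by simp
    have "polar (snd X) (g w1) (g w') = polar (snd X) (g w2) (g w')" using bit_cancel[OF e1 e2] .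
    then have "polar (snd W) w1 w' = polar (snd W) w2 w'"
      using qmor_polar[OF Wq g] w w' by simp
    then show ?thesis using polar_add1[OF Wq w w'] by simp
  qed
  then have "w1 + w2 = 0" using Wn qs_add[OF Wq w] by (auto simp: nondeg_def)
  then have "w1 = - w2" by (simp add: eq_neg_iff_add_eq_0)
  then show ?thesis using qs_neg[OF Wq w(2)] by simp
qed

lemma compl_exists:
  assumes X: "is_qspace X" and W: "nd_qspace W" and g: "qmor W X g" and x: "x \<in> fst X"
  shows "\<exists>w\<in>fst W. x - g w \<in> orth_compl W X g"
proof -
  have Wq: "is_qspace W" and Wn: "nondeg W" using W by (auto simp: nd_qspace_def)
  let ?U = "g ` fst W"
  have s: "?U \<subseteq> fst X" using g by (auto simp: qmor_def)
  have z: "0 \<in> ?U" using qmor_0[OF Wq g] qs_0[OF Wq] by (metis image_eqI)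
  have cl: "\<forall>s\<in>?U. \<forall>t\<in>?U. s + t \<in> ?U"
  proof (intro ballI)
    fix s t assume "s \<in> ?U" "t \<in> ?U"
    then obtain a b where ab: "a \<in> fst W" "b \<in> fst W" "s = g a" "t = g b" by blast
    then have "s + t = g (a + b)" using qmor_add[OF g] by simp
    then show "s + t \<in> ?U" using qs_add[OF Wq ab(1,2)] by blast
  qed
  have nd: "\<forall>s\<in>?U. (\<forall>t\<in>?U. polar (snd X) s t = 0) \<longrightarrow> s = 0"
  proof (intro ballI impI)
    fix s assume "s \<in> ?U" and h: "\<forall>t\<in>?U. polar (snd X) s t = 0"
    then obtain w where w: "w \<in> fst W" "s = g w" by blast
    have "\<forall>w'\<in>fst W. polar (snd W) w w' = 0" using h w qmor_polar[OF Wq g] by auto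
    then have "w = 0" using Wn w by (auto simp: nondeg_def)
    then show "s = 0" using w qmor_0[OF Wq g] by simp
  qed
  obtain u where u: "u \<in> ?U" "\<forall>t\<in>?U. polar (snd X) (x + u) t = 0"
    using decomp[OF X s z cl nd x] by blast
  then obtain w where w: "w \<in> fst W" "u = g w" by blast
  have eq: "x - g w = x + g w" using qs_diff[OF X] w s by blast
  have "x + g w \<in> fst X" using qs_add[OF X x] w s by blast
  then have "x - g w \<in> orth_compl W X g" using w u unfolding eq by (auto simp: compl_iff)
  then show ?thesis using w by blast
qed

lemma the_w:
  assumes X: "is_qspace X" and W: "nd_qspace W" and g: "qmor W X g" and x: "x \<in> fst X"
  shows "(THE w. w \<in> fst W \<and> x - g w \<in> orth_compl W X g) \<in> fst W \<and>
         x - g (THE w. w \<in> fst W \<and> x - g w \<in> orth_compl W X g) \<in> orth_compl W X g"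
proof -
  have "\<exists>!w. w \<in> fst W \<and> x - g w \<in> orth_compl W X g"
  proof -
    obtain w where w: "w \<in> fst W" "x - g w \<in> orth_compl W X g" using compl_exists[OF assms] by blast
    show ?thesis
    proof (rule ex1I[of _ w])
      show "w \<in> fst W \<and> x - g w \<in> orth_compl W X g" using w by simp
      fix w' assume "w' \<in> fst W \<and> x - g w' \<in> orth_compl W X g"
      then show "w' = w" using compl_unique[OF X W g _ w(1) x _ w(2)] by simp
    qed
  qed
  then show ?thesis by (rule theI')
qed

lemma the_w_eq:
  assumes X: "is_qspace X" and W: "nd_qspace W" and g: "qmor W X g" and x: "x \<in> fst X"
    and w: "w \<in> fst W" "x - g w \<in> orth_compl W X g"
  shows "(THE w. w \<in> fst W \<and> x - g w \<in> orth_compl W X g) = w"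
proof (rule the_equality)
  show "w \<in> fst W \<and> x - g w \<in> orth_compl W X g" using w by simp
  fix w' assume "w' \<in> fst W \<and> x - g w' \<in> orth_compl W X g"
  then show "w' = w" using compl_unique[OF X W g _ w(1) x _ w(2)] by simp
qed

lemma pl_eq: "pp_left W X g x = (let w = (THE w. w \<in> fst W \<and> x - g w \<in> orth_compl W X g) in (w, x - g w, 0))"
  by (simp add: pp_left_def)
lemma pr_eq: "pp_right W Y h y = (let w = (THE w. w \<in> fst W \<and> y - h w \<in> orth_compl W Y h) in (w, 0, y - h w))"
  by (simp add: pp_right_def)

lemma pl_inj: "inj (pp_left W X g :: _ \<Rightarrow> _ \<times> _ \<times> 'y::ab_group_add)"
proof (rule injI)
  fix x y assume e: "(pp_left W X g x :: _ \<times> _ \<times> 'y) = pp_left W X g y"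
  define T where "T = (\<lambda>x. THE w. w \<in> fst W \<and> x - g w \<in> orth_compl W X g)"
  have pe: "(pp_left W X g z :: _ \<times> _ \<times> 'y) = (T z, z - g (T z), 0)" for z
    by (simp add: pp_left_def T_def Let_def)
  have 1: "T x = T y" using arg_cong[OF e, of fst] unfolding pe by simp
  have 2: "x - g (T x) = y - g (T y)" using arg_cong[OF e, of "fst \<circ> snd"] unfolding pe by simp
  have "x = (x - g (T x)) + g (T x)" by simp
  also have "\<dots> = (y - g (T y)) + g (T y)" using 1 2 by simp
  also have "\<dots> = y" by simp
  finally show "x = y" .
qed
lemma pr_inj: "inj (pp_right W Y h :: _ \<Rightarrow> _ \<times> 'x::ab_group_add \<times> _)"
proof (rule injI)
  fix x y assume e: "(pp_right W Y h x :: _ \<times> 'x \<times> _) = pp_right W Y h y"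
  define T where "T = (\<lambda>x. THE w. w \<in> fst W \<and> x - h w \<in> orth_compl W Y h)"
  have pe: "(pp_right W Y h z :: _ \<times> 'x \<times> _) = (T z, 0, z - h (T z))" for z
    by (simp add: pp_right_def T_def Let_def)
  have 1: "T x = T y" using arg_cong[OF e, of fst] unfolding pe by simp
  have 2: "x - h (T x) = y - h (T y)" using arg_cong[OF e, of "snd \<circ> snd"] unfolding pe by simp
  have "x = (x - h (T x)) + h (T x)" by simp
  also have "\<dots> = (y - h (T y)) + h (T y)" using 1 2 by simp
  also have "\<dots> = y" by simp
  finally show "x = y" .
qed

lemma compl_0: "is_qspace X \<Longrightarrow> 0 \<in> orth_compl W X g"
  using qs_0[of X] polar_01[of X] qs_q0[of X] by (simp add: compl_iff)

lemma pl_g: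
  assumes X: "is_qspace X" and W: "nd_qspace W" and g: "qmor W X g" and w: "w \<in> fst W"
  shows "pp_left W X g (g w) = (w, 0, 0)"
proof -
  have "(THE w'. w' \<in> fst W \<and> g w - g w' \<in> orth_compl W X g) = w"
  proof -
    have "g w - g w \<in> orth_compl W X g" using compl_0[OF X, of W g] by simp
    then show ?thesis using the_w_eq[OF X W g qmor_in[OF g w] w] by simp
  qed
  then show ?thesis by (simp add: pp_left_def)
qed
lemma pr_h:
  assumes Y: "is_qspace Y" and W: "nd_qspace W" and h: "qmor W Y h" and w: "w \<in> fst W"
  shows "pp_right W Y h (h w) = (w, 0, 0)"
proof -
  have "(THE w'. w' \<in> fst W \<and> h w - h w' \<in> orth_compl W Y h) = w"
  proof -
    have "h w - h w \<in> orth_compl W Y h" using compl_0[OF Y, of W h] by simp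
    then show ?thesis using the_w_eq[OF Y W h qmor_in[OF h w] w] by simp
  qed
  then show ?thesis by (simp add: pp_right_def)
qed
lemma pl_gen:
  assumes X: "is_qspace X" and W: "nd_qspace W" and g: "qmor W X g" and x: "x \<in> fst X"
  shows "\<exists>w\<in>fst W. pp_left W X g x = (w, x - g w, 0)"
  using the_w[OF assms] by (auto simp: pp_left_def Let_def)
lemma pr_gen:
  assumes Y: "is_qspace Y" and W: "nd_qspace W" and h: "qmor W Y h" and y: "y \<in> fst Y"
  shows "\<exists>w\<in>fst W. pp_right W Y h y = (w, 0, y - h w)"
  using the_w[OF assms] by (auto simp: pp_right_def Let_def)



lemma sig_qspace:
  assumes X: "is_qspace X" and V: "is_qspace V" and W: "is_qspace W"
    and f: "qmor V X f" and g: "qmor W X g"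
  shows "is_qspace (f ` fst V \<inter> g ` fst W, snd X)"
proof -
  let ?S = "f ` fst V \<inter> g ` fst W"
  have fin: "finite ?S" using qs_fin[OF V] by simp
  have z: "0 \<in> ?S" using qmor_0[OF V f] qmor_0[OF W g] qs_0[OF V] qs_0[OF W] by (metis IntI image_eqI)
  have cl: "x + y \<in> ?S" if xS: "x \<in> ?S" and yS: "y \<in> ?S" for x y
  proof -
    obtain a b where a: "a \<in> fst V" "x = f a" and b: "b \<in> fst W" "x = g b" using xS by blast
    obtain a' b' where a': "a' \<in> fst V" "y = f a'" and b': "b' \<in> fst W" "y = g b'" using yS by blast
    have "x + y = f (a + a')" using qmor_add[OF f a(1) a'(1)] a a' by simp
    moreover have "x + y = g (b + b')" using qmor_add[OF g b(1) b'(1)] b b' by simp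
    ultimately show ?thesis using qs_add[OF V a(1) a'(1)] qs_add[OF W b(1) b'(1)] by blast
  qed
  have sub: "?S \<subseteq> fst X" using f by (auto simp: qmor_def)
  have dbl: "x + x = 0" if "x \<in> ?S" for x using qs_dbl[OF X] sub that by blast
  have pol: "polar (snd X) (x + y) z = polar (snd X) x z + polar (snd X) y z"
    if "x \<in> ?S" "y \<in> ?S" "z \<in> ?S" for x y z
    using polar_add1[OF X] sub that by blast
  show ?thesis unfolding is_qspace_def f2space_def using fin z cl dbl pol qs_q0[OF X] by simp
qed

lemma sig_mor:
  assumes V: "is_qspace V" and f: "qmor V X f" and A: "A \<subseteq> f ` fst V"
  shows "qmor (A, snd X) V (inv_into (fst V) f)"
proof -
  have i1: "inv_into (fst V) f ` A \<subseteq> fst V" using A by (auto intro: inv_into_into)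
  have i2: "inj_on (inv_into (fst V) f) A" using A by (rule inj_on_inv_into)
  have i3: "inv_into (fst V) f (x + y) = inv_into (fst V) f x + inv_into (fst V) f y"
    if xy: "x \<in> A" "y \<in> A" for x y
  proof -
    obtain a b where ab: "a \<in> fst V" "b \<in> fst V" "x = f a" "y = f b" using xy A by blast
    have "x + y = f (a + b)" using qmor_add[OF f ab(1,2)] ab by simp
    then show ?thesis using ab qs_add[OF V ab(1,2)] qmor_inj[OF f] by (simp add: inv_into_f_f)
  qed
  have i4: "snd V (inv_into (fst V) f x) = snd X x" if xA: "x \<in> A" for x
  proof -
    obtain a where a: "a \<in> fst V" "x = f a" using xA A by blast
    then show ?thesis using qmor_inj[OF f] qmor_q[OF f a(1)] by (simp add: inv_into_f_f)
  qed
  show ?thesis unfolding qmor_def using i1 i2 i3 i4 by simp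
qed

lemma part1:
  assumes "is_Tq_cospan V W (f, X, g)"
  shows "is_Sq_span V W (sigma V W (f, X, g))"
proof -
  have V: "nd_qspace V" and W: "nd_qspace W" and X: "nd_qspace X" and f: "qmor V X f" and g: "qmor W X g"
    using assms by (auto simp: is_Tq_cospan_def)
  have Vq: "is_qspace V" and Wq: "is_qspace W" and Xq: "is_qspace X" using V W X by (auto simp: nd_qspace_def)
  show ?thesis unfolding is_Sq_span_def sigma_def pullback_obj_def
    using V W sig_qspace[OF Xq Vq Wq f g] sig_mor[OF Vq f, of "f ` fst V \<inter> g ` fst W"]
      sig_mor[OF Wq g, of "f ` fst V \<inter> g ` fst W"] by auto
qed

lemma part2:
  assumes c: "is_Tq_cospan V W (f, X, g)" and c': "is_Tq_cospan V W (f', X', g')"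
    and st: "cospan_step V W (f, X, g) (f', X', g')"
  shows "span_iso (sigma V W (f, X, g)) (sigma V W (f', X', g'))"
proof -
  have V: "nd_qspace V" and W: "nd_qspace W" and f: "qmor V X f" and g: "qmor W X g"
   and f': "qmor V X' f'" and g': "qmor W X' g'"
    using c c' by (auto simp: is_Tq_cospan_def)
  obtain \<phi> where ph: "qmor X X' \<phi>" "\<forall>v\<in>fst V. \<phi> (f v) = f' v" "\<forall>w\<in>fst W. \<phi> (g w) = g' w"
    using st by (auto simp: cospan_step_def)
  let ?S = "f ` fst V \<inter> g ` fst W" and ?S' = "f' ` fst V \<inter> g' ` fst W"
  have im: "\<phi> ` ?S \<subseteq> ?S'" using ph by (auto simp: image_iff)
  have sub: "?S \<subseteq> fst X" using f by (auto simp: qmor_def)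
  have inj: "inj_on \<phi> ?S" using qmor_inj[OF ph(1)] sub by (rule inj_on_subset)
  have sur: "?S' \<subseteq> \<phi> ` ?S"
  proof
    fix y assume "y \<in> ?S'"
    then obtain v w where vw: "v \<in> fst V" "w \<in> fst W" "y = f' v" "y = g' w" by blast
    have "\<phi> (f v) = \<phi> (g w)" using ph vw by simp
    then have "f v = g w" using qmor_inj[OF ph(1)] qmor_in[OF f vw(1)] qmor_in[OF g vw(2)]
      by (auto dest: inj_onD)
    then have "f v \<in> ?S" using vw by blast
    then show "y \<in> \<phi> ` ?S" using ph vw by (metis image_eqI)
  qed
  have bij: "bij_betw \<phi> ?S ?S'" unfolding bij_betw_def using inj im sur by blast
  have qm: "qmor (?S, snd X) (?S', snd X') \<phi>"
    using im inj ph(1) sub by (auto simp: qmor_def subset_iff)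
  have legs: "inv_into (fst V) f' (\<phi> x) = inv_into (fst V) f x \<and> inv_into (fst W) g' (\<phi> x) = inv_into (fst W) g x"
    if xS: "x \<in> ?S" for x
  proof -
    obtain v w where vw: "v \<in> fst V" "w \<in> fst W" "x = f v" "x = g w" using xS by blast
    have p1: "\<phi> x = f' v" and p2: "\<phi> x = g' w" using ph vw by auto
    have e1: "inv_into (fst V) f' (f' v) = v" "inv_into (fst W) g' (g' w) = w"
      "inv_into (fst V) f (f v) = v" "inv_into (fst W) g (g w) = w"
      using vw(1,2) qmor_inj[OF f] qmor_inj[OF g] qmor_inj[OF f'] qmor_inj[OF g']
      by (simp_all add: inv_into_f_f)
    have "inv_into (fst V) f' (\<phi> x) = inv_into (fst V) f x" unfolding p1 using e1(1,3) vw(3) by simp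
    moreover have "inv_into (fst W) g' (\<phi> x) = inv_into (fst W) g x" unfolding p2 using e1(2,4) vw(4) by simp
    ultimately show ?thesis by simp
  qed
  show ?thesis unfolding span_iso_def sigma_def pullback_obj_def prod.case fst_conv snd_conv
    using bij qm legs by blast
qed

lemma part3:
  assumes V: "nd_qspace V"
  shows "span_iso (sigma V V (id_cospan V)) (id_span V)"
proof -
  have Vq: "is_qspace V" using V by (simp add: nd_qspace_def)
  have qm: "qmor (fst V, snd V) V id" by (simp add: qmor_def)
  have ii: "inv_into (fst V) id x = x" if "x \<in> fst V" for x
    using that by (metis id_apply inj_on_id inv_into_f_f)
  show ?thesis unfolding span_iso_def sigma_def pullback_obj_def id_cospan_def id_span_def
    using qm ii by (auto intro!: exI[of _ id])
qed

lemma part5: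
  assumes c1: "is_Tq_cospan V1 W1 (f1, X1, g1)" and c2: "is_Tq_cospan V2 W2 (f2, X2, g2)"
  shows "span_iso (sigma (orth_sum V1 V2) (orth_sum W1 W2) (cospan_sum (f1, X1, g1) (f2, X2, g2)))
               (span_sum (sigma V1 W1 (f1, X1, g1)) (sigma V2 W2 (f2, X2, g2)))"
proof -
  have f1: "inj_on f1 (fst V1)" and g1: "inj_on g1 (fst W1)" and f2: "inj_on f2 (fst V2)"
    and g2: "inj_on g2 (fst W2)"
    using c1 c2 by (auto simp: is_Tq_cospan_def qmor_def)
  let ?S = "map_prod f1 f2 ` (fst V1 \<times> fst V2) \<inter> map_prod g1 g2 ` (fst W1 \<times> fst W2)"
  let ?T = "(f1 ` fst V1 \<inter> g1 ` fst W1) \<times> (f2 ` fst V2 \<inter> g2 ` fst W2)"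
  have ST: "?S = ?T" by (auto simp: map_prod_surj_on)
  have legs: "map_prod (inv_into (fst V1) f1) (inv_into (fst V2) f2) x =
              inv_into (fst V1 \<times> fst V2) (map_prod f1 f2) x \<and>
              map_prod (inv_into (fst W1) g1) (inv_into (fst W2) g2) x =
              inv_into (fst W1 \<times> fst W2) (map_prod g1 g2) x" if xT: "x \<in> ?T" for x
  proof -
    obtain v1 v2 w1 w2 where v: "v1 \<in> fst V1" "v2 \<in> fst V2" "w1 \<in> fst W1" "w2 \<in> fst W2"
      "x = (f1 v1, f2 v2)" "x = (g1 w1, g2 w2)" using xT by blast
    have "inv_into (fst V1 \<times> fst V2) (map_prod f1 f2) (map_prod f1 f2 (v1, v2)) = (v1, v2)"
      using map_prod_inj_on[OF f1 f2] v by (intro inv_into_f_f) auto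
    moreover have "inv_into (fst W1 \<times> fst W2) (map_prod g1 g2) (map_prod g1 g2 (w1, w2)) = (w1, w2)"
      using map_prod_inj_on[OF g1 g2] v by (intro inv_into_f_f) auto
    moreover have "inv_into (fst V1) f1 (f1 v1) = v1" "inv_into (fst V2) f2 (f2 v2) = v2"
      "inv_into (fst W1) g1 (g1 w1) = w1" "inv_into (fst W2) g2 (g2 w2) = w2"
      using v(1-4) f1 f2 g1 g2 by (simp_all add: inv_into_f_f)
    ultimately show ?thesis using v(5,6) by simp
  qed
  have qm: "qmor (?T, \<lambda>(v, w). snd X1 v + snd X2 w) (?T, \<lambda>(v, w). snd X1 v + snd X2 w) id"
    by (simp add: qmor_def)
  show ?thesis unfolding span_iso_def sigma_def pullback_obj_def cospan_sum_def span_sum_def orth_sum_def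
      prod.case fst_conv snd_conv ST
    apply (rule exI[of _ id])
    apply (intro conjI ballI)
       apply (rule bij_betw_id)
      apply (rule qm)
     apply (simp only: id_apply, erule legs[THEN conjunct1])
    apply (simp only: id_apply, erule legs[THEN conjunct2])
    done
qed



lemma part4:
  fixes V :: "'v::ab_group_add qspace" and W :: "'w::ab_group_add qspace" and U :: "'u::ab_group_add qspace"
    and X :: "'x::ab_group_add qspace" and Y :: "'y::ab_group_add qspace"
  assumes c: "is_Tq_cospan V W (f, X, g)" and d: "is_Tq_cospan W U (h, Y, k)"
  shows "span_iso (sigma V U (cospan_comp W (f, X, g) (h, Y, k)))
                  (span_comp W (sigma V W (f, X, g)) (sigma W U (h, Y, k)))"
proof -
  have V: "nd_qspace V" and W: "nd_qspace W" and X: "nd_qspace X" and f: "qmor V X f" and g: "qmor W X g"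
    using c by (auto simp: is_Tq_cospan_def)
  have U: "nd_qspace U" and Y: "nd_qspace Y" and h: "qmor W Y h" and k: "qmor U Y k"
    using d by (auto simp: is_Tq_cospan_def)
  have Vq: "is_qspace V" and Wq: "is_qspace W" and Xq: "is_qspace X" and Uq: "is_qspace U"
    and Yq: "is_qspace Y" using V W X U Y by (auto simp: nd_qspace_def)
  define pl where "pl = (pp_left W X g :: 'x \<Rightarrow> 'w \<times> 'x \<times> 'y)"
  define pr where "pr = (pp_right W Y h :: 'y \<Rightarrow> 'w \<times> 'x \<times> 'y)"
  define E where "E = {w \<in> fst W. g w \<in> f ` fst V \<and> h w \<in> k ` fst U}"
  define D1 where "D1 = (pl \<circ> f) ` fst V \<inter> (pr \<circ> k) ` fst U"
  define A where "A = f ` fst V \<inter> g ` fst W"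
  define B where "B = h ` fst W \<inter> k ` fst U"
  define D2 where "D2 = inv_into (fst W) g ` A \<inter> inv_into (fst W) h ` B"
  have D1E: "D1 = (\<lambda>w. (w, 0, 0)) ` E"
  proof
    show "D1 \<subseteq> (\<lambda>w. (w, 0, 0)) ` E"
    proof
      fix z assume "z \<in> D1"
      then obtain v u where vu: "v \<in> fst V" "u \<in> fst U" "z = pl (f v)" "z = pr (k u)"
        by (auto simp: D1_def)
      obtain w where w: "w \<in> fst W" "pl (f v) = (w, f v - g w, 0)"
        using pl_gen[OF Xq W g qmor_in[OF f vu(1)]] unfolding pl_def by blast
      obtain w' where w': "w' \<in> fst W" "pr (k u) = (w', 0, k u - h w')"
        using pr_gen[OF Yq W h qmor_in[OF k vu(2)]] unfolding pr_def by blast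
      have "(w, f v - g w, 0::'y) = (w', 0::'x, k u - h w')" using vu w w' by simp
      then have e: "w = w'" "f v - g w = 0" "k u - h w' = 0" by auto
      then have "g w = f v" "h w = k u" by simp_all
      then have "w \<in> E" using w vu by (auto simp: E_def)
      moreover have "z = (w, 0, 0)" using vu w e by simp
      ultimately show "z \<in> (\<lambda>w. (w, 0, 0)) ` E" by blast
    qed
    show "(\<lambda>w. (w, 0, 0)) ` E \<subseteq> D1"
    proof
      fix z assume "z \<in> (\<lambda>w. (w, 0::'x, 0::'y)) ` E"
      then obtain w v u where w: "w \<in> fst W" "v \<in> fst V" "u \<in> fst U" "g w = f v" "h w = k u"
        "z = (w, 0, 0)" by (auto simp: E_def)
      have "pl (f v) = z" using pl_g[OF Xq W g w(1)] w unfolding pl_def by simp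
      moreover have "pr (k u) = z" using pr_h[OF Yq W h w(1)] w unfolding pr_def by simp
      ultimately show "z \<in> D1" using w unfolding D1_def by (metis IntI comp_apply image_eqI)
    qed
  qed
  have D2E: "D2 = E"
  proof
    show "D2 \<subseteq> E"
    proof
      fix z assume "z \<in> D2"
      then obtain a b where ab: "a \<in> A" "b \<in> B" "z = inv_into (fst W) g a" "z = inv_into (fst W) h b"
        by (auto simp: D2_def)
      obtain v w0 where a: "v \<in> fst V" "w0 \<in> fst W" "a = f v" "a = g w0" using ab(1) by (auto simp: A_def)
      obtain u w1 where b: "u \<in> fst U" "w1 \<in> fst W" "b = k u" "b = h w1" using ab(2) by (auto simp: B_def)
      have "inv_into (fst W) g (g w0) = w0" using qmor_inj[OF g] a(2) by (simp add: inv_into_f_f)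
      then have z0: "z = w0" using ab(3) a(4) by simp
      have "inv_into (fst W) h (h w1) = w1" using qmor_inj[OF h] b(2) by (simp add: inv_into_f_f)
      then have z1: "z = w1" using ab(4) b(4) by simp
      show "z \<in> E" unfolding E_def using z0 z1 a b by auto
    qed
    show "E \<subseteq> D2"
    proof
      fix w assume "w \<in> E"
      then have w: "w \<in> fst W" "g w \<in> f ` fst V" "h w \<in> k ` fst U" by (auto simp: E_def)
      have "g w \<in> A" "h w \<in> B" using w by (auto simp: A_def B_def)
      moreover have "inv_into (fst W) g (g w) = w" "inv_into (fst W) h (h w) = w"
        using qmor_inj[OF g] qmor_inj[OF h] w(1) by (simp_all add: inv_into_f_f)
      ultimately show "w \<in> D2" unfolding D2_def by (metis IntI image_eqI)
    qed
  qed
  have bij: "bij_betw fst D1 D2" unfolding D1E D2E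
    by (auto simp: bij_betw_def inj_on_def image_image)
  have qm: "qmor (D1, snd (pp_obj W X Y g h)) (D2, snd W) fst"
    unfolding D1E D2E qmor_def using qs_q0[OF Xq] qs_q0[OF Yq]
    by (auto simp: inj_on_def pp_obj_def orth_sum_def)
  have injplf: "inj_on (pl \<circ> f) (fst V)"
    using comp_inj_on[OF qmor_inj[OF f], of pl] pl_inj[of W X g] unfolding pl_def
    by (metis inj_on_subset subset_UNIV)
  have injprk: "inj_on (pr \<circ> k) (fst U)"
    using comp_inj_on[OF qmor_inj[OF k], of pr] pr_inj[of W Y h] unfolding pr_def
    by (metis inj_on_subset subset_UNIV)
  have legs: "(inv_into (fst V) f \<circ> inv_into A (inv_into (fst W) g)) (fst z) = inv_into (fst V) (pl \<circ> f) z \<and>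
              (inv_into (fst U) k \<circ> inv_into B (inv_into (fst W) h)) (fst z) = inv_into (fst U) (pr \<circ> k) z"
    if zD: "z \<in> D1" for z
  proof -
    obtain w where wE: "w \<in> E" and z: "z = (w, 0, 0)" using zD unfolding D1E by blast
    obtain v u where w: "w \<in> fst W" "v \<in> fst V" "u \<in> fst U" "g w = f v" "h w = k u"
      using wE by (auto simp: E_def)
    have gA: "g w \<in> A" unfolding A_def using w(1,2,4) by (metis IntI image_eqI)
    have hB: "h w \<in> B" unfolding B_def using w(1,3,5) by (metis IntI image_eqI)
    have iA: "inj_on (inv_into (fst W) g) A" by (rule inj_on_inv_into) (auto simp: A_def)
    have iB: "inj_on (inv_into (fst W) h) B" by (rule inj_on_inv_into) (auto simp: B_def)
    have gg: "inv_into (fst W) g (g w) = w" using qmor_inj[OF g] w(1) by (simp add: inv_into_f_f)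
    have hh: "inv_into (fst W) h (h w) = w" using qmor_inj[OF h] w(1) by (simp add: inv_into_f_f)
    have a1: "inv_into A (inv_into (fst W) g) w = g w"
      using inv_into_f_f[OF iA gA] unfolding gg .
    have b1: "inv_into B (inv_into (fst W) h) w = h w"
      using inv_into_f_f[OF iB hB] unfolding hh .
    have a2: "inv_into (fst V) f (g w) = v" unfolding w(4) using qmor_inj[OF f] w(2) by (simp add: inv_into_f_f)
    have b2: "inv_into (fst U) k (h w) = u" unfolding w(5) using qmor_inj[OF k] w(3) by (simp add: inv_into_f_f)
    have pv: "(pl \<circ> f) v = z" using pl_g[OF Xq W g w(1)] w(4) z unfolding pl_def by simp
    have pu: "(pr \<circ> k) u = z" using pr_h[OF Yq W h w(1)] w(5) z unfolding pr_def by simp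
    have a3: "inv_into (fst V) (pl \<circ> f) z = v" using inv_into_f_f[OF injplf w(2)] unfolding pv .
    have b3: "inv_into (fst U) (pr \<circ> k) z = u" using inv_into_f_f[OF injprk w(3)] unfolding pu .
    show ?thesis using a1 a2 a3 b1 b2 b3 z by simp
  qed
  show ?thesis
    unfolding span_iso_def sigma_def pullback_obj_def cospan_comp_def span_comp_def
      prod.case fst_conv snd_conv pl_def[symmetric] pr_def[symmetric]
      D1_def[symmetric] A_def[symmetric] B_def[symmetric] D2_def[symmetric]
    apply (rule exI[of _ fst])
    apply (intro conjI ballI)
       apply (rule bij)
      apply (rule qm)
     apply (erule legs[THEN conjunct1])
    apply (erule legs[THEN conjunct2])
    done
qed

theorem proposition4p17:
  shows
  \<comment> \<open>sigma sends morphisms of T_q to morphisms of S_q\<close>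
  "(\<forall>(V::'v::ab_group_add qspace) (W::'w::ab_group_add qspace) (c::('v,'x::ab_group_add,'w) cospan).
      is_Tq_cospan V W c \<longrightarrow> is_Sq_span V W (sigma V W c))
   \<and>
  \<comment> \<open>sigma is compatible with the equivalence relation defining morphisms of T_q\<close>
   (\<forall>(V::'v qspace) (W::'w qspace) (c::('v,'x,'w) cospan) (c'::('v,'y::ab_group_add,'w) cospan).
      is_Tq_cospan V W c \<longrightarrow> is_Tq_cospan V W c' \<longrightarrow> cospan_step V W c c' \<longrightarrow>
      span_iso (sigma V W c) (sigma V W c'))
   \<and>
  \<comment> \<open>sigma preserves identities\<close>
   (\<forall>V::'v qspace. nd_qspace V \<longrightarrow> span_iso (sigma V V (id_cospan V)) (id_span V))
   \<and>
  \<comment> \<open>sigma preserves composition\<close>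
   (\<forall>(V::'v qspace) (W::'w qspace) (U::'u::ab_group_add qspace)
       (c::('v,'x,'w) cospan) (d::('w,'y,'u) cospan).
      is_Tq_cospan V W c \<longrightarrow> is_Tq_cospan W U d \<longrightarrow>
      span_iso (sigma V U (cospan_comp W c d)) (span_comp W (sigma V W c) (sigma W U d)))
   \<and>
  \<comment> \<open>sigma is (strict) monoidal for the orthogonal sums\<close>
   (\<forall>(V1::'v qspace) (W1::'w qspace) (c1::('v,'x,'w) cospan)
       (V2::'u qspace) (W2::'y qspace) (c2::('u,'z::ab_group_add,'y) cospan).
      is_Tq_cospan V1 W1 c1 \<longrightarrow> is_Tq_cospan V2 W2 c2 \<longrightarrow>
      span_iso (sigma (orth_sum V1 V2) (orth_sum W1 W2) (cospan_sum c1 c2))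
               (span_sum (sigma V1 W1 c1) (sigma V2 W2 c2)))"
proof (intro conjI allI impI)
  fix V :: "'v qspace" and W :: "'w qspace" and c :: "('v,'x,'w) cospan"
  assume a: "is_Tq_cospan V W c"
  obtain f X g where "c = (f, X, g)" by (cases c) auto
  then show "is_Sq_span V W (sigma V W c)" using part1 a by simp
next
  fix V :: "'v qspace" and W :: "'w qspace" and c :: "('v,'x,'w) cospan" and c' :: "('v,'y,'w) cospan"
  assume a: "is_Tq_cospan V W c" "is_Tq_cospan V W c'" "cospan_step V W c c'"
  obtain f X g where "c = (f, X, g)" by (cases c) auto
  moreover obtain f' X' g' where "c' = (f', X', g')" by (cases c') auto
  ultimately show "span_iso (sigma V W c) (sigma V W c')" using part2 a by simp
next
  fix V :: "'v qspace" assume "nd_qspace V"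
  then show "span_iso (sigma V V (id_cospan V)) (id_span V)" by (rule part3)
next
  fix V :: "'v qspace" and W :: "'w qspace" and U :: "'u qspace"
    and c :: "('v,'x,'w) cospan" and d :: "('w,'y,'u) cospan"
  assume a: "is_Tq_cospan V W c" "is_Tq_cospan W U d"
  obtain f X g where "c = (f, X, g)" by (cases c) auto
  moreover obtain h Y k where "d = (h, Y, k)" by (cases d) auto
  ultimately show "span_iso (sigma V U (cospan_comp W c d)) (span_comp W (sigma V W c) (sigma W U d))"
    using part4 a by simp
next
  fix V1 :: "'v qspace" and W1 :: "'w qspace" and c1 :: "('v,'x,'w) cospan"
    and V2 :: "'u qspace" and W2 :: "'y qspace" and c2 :: "('u,'z,'y) cospan"
  assume a: "is_Tq_cospan V1 W1 c1" "is_Tq_cospan V2 W2 c2"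
  obtain f1 X1 g1 where "c1 = (f1, X1, g1)" by (cases c1) auto
  moreover obtain f2 X2 g2 where "c2 = (f2, X2, g2)" by (cases c2) auto
  ultimately show "span_iso (sigma (orth_sum V1 V2) (orth_sum W1 W2) (cospan_sum c1 c2))
               (span_sum (sigma V1 W1 c1) (sigma V2 W2 c2))"
    using part5 a by simp
qed

end
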